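(* For $n>5$ let $P_{2n}(x)=x^{2n}+x^{n+5}+x^{n+3}+x^{n+1}+x^{n-1}+x^{n-3}+x^{n-5}+1$. Let $\beta\in(0,1)$ be the positive real number with $16\beta^5-16\beta^3+3\beta=1$ (so that the real solutions of $16x^5-16x^3+3x=\pm1$ are exactly $\pm\beta$, $\beta\approx 0.92757157104$). Then $\lim_{n\to\infty}C(P_{2n})=\frac{2}{\pi}\arccos(\beta)\approx 0.243784699$.
   Context: For a polynomial $P$ of degree $d$, let $I(P)$ and $E(P)$ denote the numbers of complex zeros of $P$ (counted with multiplicity) of modulus $<1$ and $>1$ respectively, and $C(P)=\frac{I(P)+E(P)}{d}$. *)

theory Defs
  imports "HOL-Analysis.Analysis" "HOL-Computational_Algebra.Polynomial"
begin

definition inner_zeros :: "complex poly \<Rightarrow> nat" where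
  "inner_zeros p = (\<Sum>z\<in>{z. poly p z = 0 \<and> cmod z < 1}. order z p)"

definition outer_zeros :: "complex poly \<Rightarrow> nat" where
  "outer_zeros p = (\<Sum>z\<in>{z. poly p z = 0 \<and> cmod z > 1}. order z p)"

definition C_ratio :: "complex poly \<Rightarrow> real" where
  "C_ratio p = real (inner_zeros p + outer_zeros p) / real (degree p)"

definition P2n :: "nat \<Rightarrow> complex poly" where
  "P2n n = monom 1 (2*n) + monom 1 (n+5) + monom 1 (n+3) + monom 1 (n+1)
           + monom 1 (n-1) + monom 1 (n-3) + monom 1 (n-5) + 1"

end

theory Submission
  imports Defs "HOL-Computational_Algebra.Fundamental_Theorem_Algebra"
begin

lemma omf_0: fixes x::real assumes "(0) \<le> x" "x \<le> (23/50)" shows "0 < 1 - (16*x^5-16*x^3+3*x)"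
proof -
  have e: "1 - (16*x^5-16*x^3+3*x) = (312500000/6436343)*(x-(0))^0*((23/50)-x)^5 + (1131250000/6436343)*(x-(0))^1*((23/50)-x)^4 + (1400000000/6436343)*(x-(0))^2*((23/50)-x)^3 + (1024180000/6436343)*(x-(0))^3*((23/50)-x)^2 + (810860000/6436343)*(x-(0))^4*((23/50)-x)^1 + (264948512/6436343)*(x-(0))^5*((23/50)-x)^0" by algebra
  have "0 \<le> (1131250000/6436343)*(x-(0))^1*((23/50)-x)^4 + (1400000000/6436343)*(x-(0))^2*((23/50)-x)^3 + (1024180000/6436343)*(x-(0))^3*((23/50)-x)^2 + (810860000/6436343)*(x-(0))^4*((23/50)-x)^1"
    using assms by (intro add_nonneg_nonneg mult_nonneg_nonneg) auto
  moreover have "0 < (312500000/6436343)*(x-(0))^0*((23/50)-x)^5 + (264948512/6436343)*(x-(0))^5*((23/50)-x)^0"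
  proof (cases "x < (23/50)")
    case True
    then have "0 < (312500000/6436343)*(x-(0))^0*((23/50)-x)^5" by simp
    moreover have "0 \<le> (264948512/6436343)*(x-(0))^5*((23/50)-x)^0" using assms by simp
    ultimately show ?thesis by linarith
  next
    case False
    then have "0 < (264948512/6436343)*(x-(0))^5*((23/50)-x)^0" using assms by simp
    moreover have "0 \<le> (312500000/6436343)*(x-(0))^0*((23/50)-x)^5" using assms by simp
    ultimately show ?thesis by linarith
  qed
  ultimately show ?thesis using e by linarith
qed

lemma omf_1: fixes x::real assumes "(23/50) \<le> x" "x \<le> (23/25)" shows "0 < 1 - (16*x^5-16*x^3+3*x)"
proof -
  have e: "1 - (16*x^5-16*x^3+3*x) = (264948512/6436343)*(x-(23/50))^0*((23/25)-x)^5 + (1838625120/6436343)*(x-(23/50))^1*((23/25)-x)^4 + (5135240480/6436343)*(x-(23/50))^2*((23/25)-x)^3 + (6480320960/6436343)*(x-(23/50))^3*((23/25)-x)^2 + (3069770960/6436343)*(x-(23/50))^4*((23/25)-x)^1 + (48032384/6436343)*(x-(23/50))^5*((23/25)-x)^0" by algebra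
  have "0 \<le> (1838625120/6436343)*(x-(23/50))^1*((23/25)-x)^4 + (5135240480/6436343)*(x-(23/50))^2*((23/25)-x)^3 + (6480320960/6436343)*(x-(23/50))^3*((23/25)-x)^2 + (3069770960/6436343)*(x-(23/50))^4*((23/25)-x)^1"
    using assms by (intro add_nonneg_nonneg mult_nonneg_nonneg) auto
  moreover have "0 < (264948512/6436343)*(x-(23/50))^0*((23/25)-x)^5 + (48032384/6436343)*(x-(23/50))^5*((23/25)-x)^0"
  proof (cases "x < (23/25)")
    case True
    then have "0 < (264948512/6436343)*(x-(23/50))^0*((23/25)-x)^5" by simp
    moreover have "0 \<le> (48032384/6436343)*(x-(23/50))^5*((23/25)-x)^0" using assms by simp
    ultimately show ?thesis by linarith
  next
    case False
    then have "0 < (48032384/6436343)*(x-(23/50))^5*((23/25)-x)^0" using assms by simp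
    moreover have "0 \<le> (264948512/6436343)*(x-(23/50))^0*((23/25)-x)^5" using assms by simp
    ultimately show ?thesis by linarith
  qed
  ultimately show ?thesis using e by linarith
qed

lemma fp1_0: fixes x::real assumes "(0) \<le> x" "x \<le> (1/2)" shows "0 < 16*x^5-16*x^3+3*x + 1"
proof -
  have e: "16*x^5-16*x^3+3*x + 1 = (32)*(x-(0))^0*((1/2)-x)^5 + (208)*(x-(0))^1*((1/2)-x)^4 + (512)*(x-(0))^2*((1/2)-x)^3 + (544)*(x-(0))^3*((1/2)-x)^2 + (224)*(x-(0))^4*((1/2)-x)^1 + (32)*(x-(0))^5*((1/2)-x)^0" by algebra
  have "0 \<le> (208)*(x-(0))^1*((1/2)-x)^4 + (512)*(x-(0))^2*((1/2)-x)^3 + (544)*(x-(0))^3*((1/2)-x)^2 + (224)*(x-(0))^4*((1/2)-x)^1"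
    using assms by (intro add_nonneg_nonneg mult_nonneg_nonneg) auto
  moreover have "0 < (32)*(x-(0))^0*((1/2)-x)^5 + (32)*(x-(0))^5*((1/2)-x)^0"
  proof (cases "x < (1/2)")
    case True
    then have "0 < (32)*(x-(0))^0*((1/2)-x)^5" by simp
    moreover have "0 \<le> (32)*(x-(0))^5*((1/2)-x)^0" using assms by simp
    ultimately show ?thesis by linarith
  next
    case False
    then have "0 < (32)*(x-(0))^5*((1/2)-x)^0" using assms by simp
    moreover have "0 \<le> (32)*(x-(0))^0*((1/2)-x)^5" using assms by simp
    ultimately show ?thesis by linarith
  qed
  ultimately show ?thesis using e by linarith
qed

lemma fp1_1: fixes x::real assumes "(1/2) \<le> x" "x \<le> (3/4)" shows "0 < 16*x^5-16*x^3+3*x + 1"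
proof -
  have e: "16*x^5-16*x^3+3*x + 1 = (1024)*(x-(1/2))^0*((3/4)-x)^5 + (4096)*(x-(1/2))^1*((3/4)-x)^4 + (5888)*(x-(1/2))^2*((3/4)-x)^3 + (3712)*(x-(1/2))^3*((3/4)-x)^2 + (1184)*(x-(1/2))^4*((3/4)-x)^1 + (304)*(x-(1/2))^5*((3/4)-x)^0" by algebra
  have "0 \<le> (4096)*(x-(1/2))^1*((3/4)-x)^4 + (5888)*(x-(1/2))^2*((3/4)-x)^3 + (3712)*(x-(1/2))^3*((3/4)-x)^2 + (1184)*(x-(1/2))^4*((3/4)-x)^1"
    using assms by (intro add_nonneg_nonneg mult_nonneg_nonneg) auto
  moreover have "0 < (1024)*(x-(1/2))^0*((3/4)-x)^5 + (304)*(x-(1/2))^5*((3/4)-x)^0"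
  proof (cases "x < (3/4)")
    case True
    then have "0 < (1024)*(x-(1/2))^0*((3/4)-x)^5" by simp
    moreover have "0 \<le> (304)*(x-(1/2))^5*((3/4)-x)^0" using assms by simp
    ultimately show ?thesis by linarith
  next
    case False
    then have "0 < (304)*(x-(1/2))^5*((3/4)-x)^0" using assms by simp
    moreover have "0 \<le> (1024)*(x-(1/2))^0*((3/4)-x)^5" using assms by simp
    ultimately show ?thesis by linarith
  qed
  ultimately show ?thesis using e by linarith
qed

lemma fp1_2: fixes x::real assumes "(3/4) \<le> x" "x \<le> (1)" shows "0 < 16*x^5-16*x^3+3*x + 1"
proof -
  have e: "16*x^5-16*x^3+3*x + 1 = (304)*(x-(3/4))^0*((1)-x)^5 + (1856)*(x-(3/4))^1*((1)-x)^4 + (6400)*(x-(3/4))^2*((1)-x)^3 + (12288)*(x-(3/4))^3*((1)-x)^2 + (11520)*(x-(3/4))^4*((1)-x)^1 + (4096)*(x-(3/4))^5*((1)-x)^0" by algebra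
  have "0 \<le> (1856)*(x-(3/4))^1*((1)-x)^4 + (6400)*(x-(3/4))^2*((1)-x)^3 + (12288)*(x-(3/4))^3*((1)-x)^2 + (11520)*(x-(3/4))^4*((1)-x)^1"
    using assms by (intro add_nonneg_nonneg mult_nonneg_nonneg) auto
  moreover have "0 < (304)*(x-(3/4))^0*((1)-x)^5 + (4096)*(x-(3/4))^5*((1)-x)^0"
  proof (cases "x < (1)")
    case True
    then have "0 < (304)*(x-(3/4))^0*((1)-x)^5" by simp
    moreover have "0 \<le> (4096)*(x-(3/4))^5*((1)-x)^0" using assms by simp
    ultimately show ?thesis by linarith
  next
    case False
    then have "0 < (4096)*(x-(3/4))^5*((1)-x)^0" using assms by simp
    moreover have "0 \<le> (304)*(x-(3/4))^0*((1)-x)^5" using assms by simp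
    ultimately show ?thesis by linarith
  qed
  ultimately show ?thesis using e by linarith
qed

definition ff :: "real \<Rightarrow> real" where "ff x = 16*x^5-16*x^3+3*x"

lemma ff_lt1: "0 \<le> x \<Longrightarrow> x \<le> 23/25 \<Longrightarrow> ff x < 1"
  using omf_0[of x] omf_1[of x] unfolding ff_def by (cases "x \<le> 23/50") auto

lemma ff_gtm1: "0 \<le> x \<Longrightarrow> x \<le> 1 \<Longrightarrow> -1 < ff x"
  using fp1_0[of x] fp1_1[of x] fp1_2[of x] unfolding ff_def
  by (cases "x \<le> 1/2"; cases "x \<le> 3/4") auto

lemma ff_mono: assumes "9/10 \<le> x" "x < y" "y \<le> 1" shows "ff x < ff y"
proof -
  have e: "ff y - ff x = (y-x)*(16*(x^4+x^3*y+x^2*y^2+x*y^3+y^4) - 16*(x^2+x*y+y^2)+3)"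
    unfolding ff_def by algebra
  have x0: "0 \<le> x" using assms by simp
  have y0: "9/10 \<le> y" using assms by simp
  have "(9/10)^4 \<le> x^4" using assms by (intro power_mono) auto
  moreover have "(9/10)^4 \<le> y^4" using y0 by (intro power_mono) auto
  moreover have "(9/10)^3*(9/10) \<le> x^3*y" using assms y0 by (intro mult_mono power_mono) auto
  moreover have "(9/10)^2*(9/10)^2 \<le> x^2*y^2" using assms y0 by (intro mult_mono power_mono) auto
  moreover have "(9/10)*(9/10)^3 \<le> x*y^3" using assms y0 by (intro mult_mono power_mono) auto
  moreover have "x^2 \<le> 1" using assms by (simp add: power_le_one)
  moreover have "y^2 \<le> 1" using assms by (simp add: power_le_one)
  moreover have "x*y \<le> 1" using assms by (simp add: mult_le_one)
  ultimately have "0 < 16*(x^4+x^3*y+x^2*y^2+x*y^3+y^4) - 16*(x^2+x*y+y^2)+3"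
    by (simp add: power_numeral_reduce)
  then have "0 < ff y - ff x" using e assms by simp
  then show ?thesis by simp
qed

lemma ff_odd: "ff (-x) = - ff x" unfolding ff_def by simp

lemma ff_abs: "\<bar>ff x\<bar> = \<bar>ff \<bar>x\<bar>\<bar>"
  by (cases "0 \<le> x") (auto simp: ff_odd)

locale betaloc =
  fixes \<beta> :: real
  assumes b0: "0 < \<beta>" and b1: "\<beta> < 1" and fb: "ff \<beta> = 1"
begin

lemma beta_gt: "23/25 < \<beta>"
  using ff_lt1[of \<beta>] b0 fb by force

lemma ff_nonneg_shape:
  assumes "0 \<le> x" "x \<le> 1"
  shows "x < \<beta> \<Longrightarrow> \<bar>ff x\<bar> < 1" and "\<beta> < x \<Longrightarrow> 1 < ff x"
proof -
  show "x < \<beta> \<Longrightarrow> \<bar>ff x\<bar> < 1"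
  proof -
    assume "x < \<beta>"
    have "ff x < 1"
    proof (cases "x \<le> 23/25")
      case True then show ?thesis using ff_lt1 assms by auto
    next
      case False then show ?thesis using ff_mono[of x \<beta>] \<open>x < \<beta>\<close> b1 fb by auto
    qed
    then show ?thesis using ff_gtm1[OF assms] by auto
  qed
  show "\<beta> < x \<Longrightarrow> 1 < ff x"
    using ff_mono[of \<beta> x] beta_gt assms fb by auto
qed

lemma ff_shape1: "\<bar>x\<bar> < \<beta> \<Longrightarrow> \<bar>ff x\<bar> < 1"
  using ff_nonneg_shape(1)[of "\<bar>x\<bar>"] b1 ff_abs[of x] by auto

lemma ff_shape2: "\<bar>x\<bar> \<le> 1 \<Longrightarrow> \<bar>ff x\<bar> \<le> 1 \<Longrightarrow> \<bar>x\<bar> \<le> \<beta>"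
  using ff_nonneg_shape(2)[of "\<bar>x\<bar>"] ff_abs[of x] by force

end


lemma P2n_degree: assumes "5 < n" shows "degree (P2n n) = 2*n"
proof (rule antisym)
  show "degree (P2n n) \<le> 2*n" using assms unfolding P2n_def
    by (intro degree_add_le) (auto simp: degree_monom_eq intro: order.trans[OF degree_monom_le])
  have "coeff (P2n n) (2*n) = 1" using assms unfolding P2n_def by (auto simp: coeff_monom)
  then show "2*n \<le> degree (P2n n)" by (intro le_degree) simp
qed

lemma P2n_nz: "5 < n \<Longrightarrow> P2n n \<noteq> 0"
  using P2n_degree[of n] by fastforce

definition gf :: "nat \<Rightarrow> real \<Rightarrow> real" where
  "gf n t = cos (real n * t) + cos t + cos (3*t) + cos (5*t)"
definition g1f :: "nat \<Rightarrow> real \<Rightarrow> real" where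
  "g1f n t = - real n * sin (real n * t) - sin t - 3 * sin (3*t) - 5 * sin (5*t)"
definition g2f :: "nat \<Rightarrow> real \<Rightarrow> real" where
  "g2f n t = - (real n * real n) * cos (real n * t) - cos t - 9 * cos (3*t) - 25 * cos (5*t)"

lemma cis_comb: "complex_of_real u * cis w + complex_of_real v * cis (-w)
   = complex_of_real ((u+v) * cos w) + \<i> * complex_of_real ((u-v) * sin w)"
  by (simp add: complex_eq_iff algebra_simps)

lemma cis_pow_pair:
  assumes "k \<le> n"
  shows "cis t ^ (n+k) = cis (real n * t) * cis (real k * t)"
    and "cis t ^ (n-k) = cis (real n * t) * cis (-(real k * t))"
proof -
  have d: "cis t ^ m = cis (real m * t)" for m by (rule Complex.DeMoivre)
  show "cis t ^ (n+k) = cis (real n * t) * cis (real k * t)"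
    unfolding d by (simp add: cis_mult algebra_simps)
  show "cis t ^ (n-k) = cis (real n * t) * cis (-(real k * t))"
    unfolding d using assms by (simp add: cis_mult of_nat_diff algebra_simps)
qed

lemma pairj:
  assumes "k \<le> n"
  shows "(of_nat (n+k))^j * cis t ^ (n+k) + (of_nat (n-k))^j * cis t ^ (n-k)
     = cis (real n * t) * (complex_of_real ((real n + real k)^j) * cis (real k * t)
        + complex_of_real ((real n - real k)^j) * cis (-(real k * t)))"
proof -
  have "(of_nat (n-k) :: complex) = complex_of_real (real n - real k)"
    using assms by (simp add: of_nat_diff)
  then show ?thesis using cis_pow_pair[OF assms, of t] assms by (simp add: algebra_simps of_nat_diff)
qed

lemma pair0: assumes "k \<le> n" shows "cis t ^ (n+k) + cis t ^ (n-k)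
   = cis (real n * t) * complex_of_real (2 * cos (real k * t))"
  using pairj[OF assms, of 0 t] cis_comb[of 1 "real k * t" 1] by simp

lemma pair1: assumes "k \<le> n" shows "of_nat (n+k) * cis t ^ (n+k) + of_nat (n-k) * cis t ^ (n-k)
   = cis (real n * t) * (complex_of_real (2 * real n * cos (real k * t)) + \<i> * complex_of_real (2 * real k * sin (real k * t)))"
  using pairj[OF assms, of 1 t] cis_comb[of "real n + real k" "real k * t" "real n - real k"] by simp

lemma pair2: assumes "k \<le> n" shows "(of_nat (n+k))^2 * cis t ^ (n+k) + (of_nat (n-k))^2 * cis t ^ (n-k)
   = cis (real n * t) * (complex_of_real ((2 * (real n)^2 + 2 * (real k)^2) * cos (real k * t)) + \<i> * complex_of_real (4 * real n * real k * sin (real k * t)))"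
proof -
  have a: "(real n + real k)^2 + (real n - real k)^2 = 2 * (real n)^2 + 2 * (real k)^2"
    by (simp add: power2_eq_square algebra_simps)
  have b: "(real n + real k)^2 - (real n - real k)^2 = 4 * real n * real k"
    by (simp add: power2_eq_square algebra_simps)
  show ?thesis
    using pairj[OF assms, of 2 t] cis_comb[of "(real n + real k)^2" "real k * t" "(real n - real k)^2"]
    by (simp only: a b)
qed



lemma mD1: "z * poly (pderiv (monom (1::complex) e)) z = of_nat e * z^e"
  by (cases e) (simp_all add: pderiv_monom poly_monom)

lemma mD2: "z^2 * poly (pderiv (pderiv (monom (1::complex) e))) z + z * poly (pderiv (monom 1 e)) z
   = (of_nat e)^2 * z^e"
proof (cases e)
  case 0 then show ?thesis by (simp add: pderiv_monom)
next
  case (Suc m)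
  then show ?thesis
  proof (cases m)
    case 0 then show ?thesis using Suc by (simp add: pderiv_monom)
  next
    case (Suc l)
    then show ?thesis using \<open>e = Suc m\<close>
      by (simp add: pderiv_monom poly_monom power2_eq_square algebra_simps)
  qed
qed

lemma S0: "poly (P2n n) z = z^(2*n) + z^(n+5) + z^(n+3) + z^(n+1) + z^(n-1) + z^(n-3) + z^(n-5) + 1"
  unfolding P2n_def by (simp add: poly_monom)

lemma S1: "z * poly (pderiv (P2n n)) z = of_nat (2*n) * z^(2*n) + of_nat (n+5) * z^(n+5)
   + of_nat (n+3) * z^(n+3) + of_nat (n+1) * z^(n+1) + of_nat (n-1) * z^(n-1)
   + of_nat (n-3) * z^(n-3) + of_nat (n-5) * z^(n-5)"
  unfolding P2n_def pderiv_add poly_add distrib_left mD1 by simp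

lemma S2: "z^2 * poly (pderiv (pderiv (P2n n))) z + z * poly (pderiv (P2n n)) z
   = (of_nat (2*n))^2 * z^(2*n) + (of_nat (n+5))^2 * z^(n+5)
   + (of_nat (n+3))^2 * z^(n+3) + (of_nat (n+1))^2 * z^(n+1) + (of_nat (n-1))^2 * z^(n-1)
   + (of_nat (n-3))^2 * z^(n-3) + (of_nat (n-5))^2 * z^(n-5)"
proof -
  have "z^2 * poly (pderiv (pderiv (P2n n))) z + z * poly (pderiv (P2n n)) z
     = (z^2 * poly (pderiv (pderiv (monom 1 (2*n)))) z + z * poly (pderiv (monom 1 (2*n))) z)
     + (z^2 * poly (pderiv (pderiv (monom 1 (n+5)))) z + z * poly (pderiv (monom 1 (n+5))) z)
     + (z^2 * poly (pderiv (pderiv (monom 1 (n+3)))) z + z * poly (pderiv (monom 1 (n+3))) z)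
     + (z^2 * poly (pderiv (pderiv (monom 1 (n+1)))) z + z * poly (pderiv (monom 1 (n+1))) z)
     + (z^2 * poly (pderiv (pderiv (monom 1 (n-1)))) z + z * poly (pderiv (monom 1 (n-1))) z)
     + (z^2 * poly (pderiv (pderiv (monom 1 (n-3)))) z + z * poly (pderiv (monom 1 (n-3))) z)
     + (z^2 * poly (pderiv (pderiv (monom 1 (n-5)))) z + z * poly (pderiv (monom 1 (n-5))) z)"
    unfolding P2n_def pderiv_add poly_add distrib_left by simp
  then show ?thesis unfolding mD2 .
qed

lemma two_n: "(2::nat)*n = n + n" by simp

lemma poly_cis: assumes "5 \<le> n"
  shows "poly (P2n n) (cis t) = 2 * cis (real n * t) * complex_of_real (gf n t)"
proof -
  have h3: "3 \<le> n" and h1: "1 \<le> n" using assms by auto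
  have "poly (P2n n) (cis t) = (cis t^(n+n) + cis t^(n-n)) + (cis t^(n+5) + cis t^(n-5))
     + (cis t^(n+3) + cis t^(n-3)) + (cis t^(n+1) + cis t^(n-1))"
    unfolding S0 two_n by simp
  also have "\<dots> = cis (real n * t) * (complex_of_real (2 * cos (real n * t)) + complex_of_real (2 * cos (real 5 * t))
     + complex_of_real (2 * cos (real 3 * t)) + complex_of_real (2 * cos (real 1 * t)))"
    using assms unfolding pair0[OF le_refl] pair0[OF assms] pair0[OF h3] pair0[OF h1] by (simp add: algebra_simps)
  also have "\<dots> = 2 * cis (real n * t) * complex_of_real (gf n t)"
    unfolding gf_def by (simp add: algebra_simps)
  finally show ?thesis .
qed

lemma S1_cis: assumes "5 \<le> n"
  shows "cis t * poly (pderiv (P2n n)) (cis t) = cis (real n * t) *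
     (complex_of_real (2 * real n * gf n t) - \<i> * complex_of_real (2 * g1f n t))"
proof -
  have h3: "3 \<le> n" and h1: "1 \<le> n" using assms by auto
  have "cis t * poly (pderiv (P2n n)) (cis t) =
     (of_nat (n+n) * cis t^(n+n) + of_nat (n-n) * cis t^(n-n))
     + (of_nat (n+5) * cis t^(n+5) + of_nat (n-5) * cis t^(n-5))
     + (of_nat (n+3) * cis t^(n+3) + of_nat (n-3) * cis t^(n-3))
     + (of_nat (n+1) * cis t^(n+1) + of_nat (n-1) * cis t^(n-1))"
    unfolding S1 two_n by simp
  also have "\<dots> = cis (real n * t) *
     ((complex_of_real (2 * real n * cos (real n * t)) + \<i> * complex_of_real (2 * real n * sin (real n * t)))
    + (complex_of_real (2 * real n * cos (real 5 * t)) + \<i> * complex_of_real (2 * real 5 * sin (real 5 * t)))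
    + (complex_of_real (2 * real n * cos (real 3 * t)) + \<i> * complex_of_real (2 * real 3 * sin (real 3 * t)))
    + (complex_of_real (2 * real n * cos (real 1 * t)) + \<i> * complex_of_real (2 * real 1 * sin (real 1 * t))))"
    using assms unfolding pair1[OF le_refl] pair1[OF assms] pair1[OF h3] pair1[OF h1] by (simp add: algebra_simps)
  also have "\<dots> = cis (real n * t) *
     (complex_of_real (2 * real n * gf n t) - \<i> * complex_of_real (2 * g1f n t))"
    unfolding gf_def g1f_def by (simp add: algebra_simps)
  finally show ?thesis .
qed

lemma S2_cis: assumes "5 \<le> n"
  shows "(cis t)^2 * poly (pderiv (pderiv (P2n n))) (cis t) + cis t * poly (pderiv (P2n n)) (cis t)
    = cis (real n * t) *
     (complex_of_real (2 * (real n)^2 * gf n t - 2 * g2f n t) - \<i> * complex_of_real (4 * real n * g1f n t))"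
proof -
  have h3: "3 \<le> n" and h1: "1 \<le> n" using assms by auto
  have "(cis t)^2 * poly (pderiv (pderiv (P2n n))) (cis t) + cis t * poly (pderiv (P2n n)) (cis t) =
     ((of_nat (n+n))^2 * cis t^(n+n) + (of_nat (n-n))^2 * cis t^(n-n))
     + ((of_nat (n+5))^2 * cis t^(n+5) + (of_nat (n-5))^2 * cis t^(n-5))
     + ((of_nat (n+3))^2 * cis t^(n+3) + (of_nat (n-3))^2 * cis t^(n-3))
     + ((of_nat (n+1))^2 * cis t^(n+1) + (of_nat (n-1))^2 * cis t^(n-1))"
    unfolding S2 two_n by simp
  also have "\<dots> = cis (real n * t) *
     ((complex_of_real ((2 * (real n)^2 + 2 * (real n)^2) * cos (real n * t)) + \<i> * complex_of_real (4 * real n * real n * sin (real n * t)))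
    + (complex_of_real ((2 * (real n)^2 + 2 * (real 5)^2) * cos (real 5 * t)) + \<i> * complex_of_real (4 * real n * real 5 * sin (real 5 * t)))
    + (complex_of_real ((2 * (real n)^2 + 2 * (real 3)^2) * cos (real 3 * t)) + \<i> * complex_of_real (4 * real n * real 3 * sin (real 3 * t)))
    + (complex_of_real ((2 * (real n)^2 + 2 * (real 1)^2) * cos (real 1 * t)) + \<i> * complex_of_real (4 * real n * real 1 * sin (real 1 * t))))"
    using assms unfolding pair2[OF le_refl] pair2[OF assms] pair2[OF h3] pair2[OF h1] by (simp add: algebra_simps)
  also have "\<dots> = cis (real n * t) *
     (complex_of_real (2 * (real n)^2 * gf n t - 2 * g2f n t) - \<i> * complex_of_real (4 * real n * g1f n t))"
    unfolding gf_def g1f_def g2f_def by (simp add: algebra_simps power2_eq_square)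
  finally show ?thesis .
qed



lemma cis_nz: "cis t \<noteq> 0" by (simp add: cis_neq_zero)

lemma zero_iff: assumes "5 \<le> n" shows "poly (P2n n) (cis t) = 0 \<longleftrightarrow> gf n t = 0"
  using poly_cis[OF assms, of t] by (simp add: cis_neq_zero)

lemma order_one: assumes "5 \<le> n" "gf n t = 0" "g1f n t \<noteq> 0"
  shows "order (cis t) (P2n n) = 1"
proof -
  have "cis t * poly (pderiv (P2n n)) (cis t) \<noteq> 0"
    using S1_cis[OF assms(1), of t] assms(2,3) by (simp add: cis_neq_zero)
  then have d: "poly (pderiv (P2n n)) (cis t) \<noteq> 0" by auto
  then have "pderiv (P2n n) \<noteq> 0" by auto
  then have nz: "P2n n \<noteq> 0" by auto
  have r: "poly (P2n n) (cis t) = 0" using zero_iff[OF assms(1)] assms(2) by simp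
  have "order (cis t) (pderiv (P2n n)) = 0" using d by (simp add: order_root)
  then show ?thesis using order_pderiv[OF nz r] by simp
qed

lemma order_two: assumes "5 \<le> n" "gf n t = 0" "g1f n t = 0" "g2f n t \<noteq> 0"
  shows "order (cis t) (P2n n) = 2"
proof -
  have d1: "poly (pderiv (P2n n)) (cis t) = 0"
    using S1_cis[OF assms(1), of t] assms(2,3) by (simp add: cis_neq_zero)
  have "(cis t)^2 * poly (pderiv (pderiv (P2n n))) (cis t) \<noteq> 0"
    using S2_cis[OF assms(1), of t] assms(2,3,4) d1 by (simp add: cis_neq_zero)
  then have d2: "poly (pderiv (pderiv (P2n n))) (cis t) \<noteq> 0" by auto
  then have "pderiv (pderiv (P2n n)) \<noteq> 0" by auto
  then have nz1: "pderiv (P2n n) \<noteq> 0" by auto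
  then have nz: "P2n n \<noteq> 0" by auto
  have r: "poly (P2n n) (cis t) = 0" using zero_iff[OF assms(1)] assms(2) by simp
  have "order (cis t) (pderiv (pderiv (P2n n))) = 0" using d2 by (simp add: order_root)
  then have "order (cis t) (pderiv (P2n n)) = 1" using order_pderiv[OF nz1 d1] by simp
  then show ?thesis using order_pderiv[OF nz r] by simp
qed

lemma gf_deriv: "(gf n has_real_derivative g1f n t) (at t)"
  unfolding gf_def g1f_def
  by (auto intro!: derivative_eq_intros simp: algebra_simps)

lemma g1f_deriv: "(g1f n has_real_derivative g2f n t) (at t)"
  unfolding g1f_def g2f_def
  by (auto intro!: derivative_eq_intros simp: algebra_simps)

lemma rolle_real:
  fixes h :: "real \<Rightarrow> real"
  assumes "a < b" "h a = h b" "\<And>x. a \<le> x \<Longrightarrow> x \<le> b \<Longrightarrow> (h has_real_derivative h' x) (at x)"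
  shows "\<exists>z. a < z \<and> z < b \<and> h' z = 0"
proof -
  have "continuous_on {a..b} h"
  proof (intro continuous_at_imp_continuous_on ballI)
    fix x assume "x \<in> {a..b}"
    then show "isCont h x" using assms(3)[of x] DERIV_isCont by auto
  qed
  moreover have "\<And>x. a < x \<Longrightarrow> x < b \<Longrightarrow> (h has_derivative (\<lambda>v. h' x * v)) (at x)"
  proof -
    fix x assume "a < x" "x < b"
    then have "(h has_real_derivative h' x) (at x)" using assms(3)[of x] by linarith
    then show "(h has_derivative (\<lambda>v. h' x * v)) (at x)" unfolding has_field_derivative_def .
  qed
  ultimately obtain z where z: "a < z" "z < b" "(\<lambda>v. h' z * v) = (\<lambda>v. 0)"
    using Rolle_deriv[OF assms(1,2), of "\<lambda>x v. h' x * v"] by blast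
  from z(3) have "h' z * 1 = 0" by (rule fun_cong)
  then show ?thesis using z(1,2) by auto
qed

lemma atmost1:
  fixes h :: "real \<Rightarrow> real"
  assumes d: "\<And>x. a \<le> x \<Longrightarrow> x \<le> b \<Longrightarrow> (h has_real_derivative h' x) (at x)"
    and nz: "\<And>x. a \<le> x \<Longrightarrow> x \<le> b \<Longrightarrow> h' x \<noteq> 0"
    and xy: "a \<le> x" "x \<le> b" "a \<le> y" "y \<le> b" "h x = 0" "h y = 0"
  shows "x = y"
proof (rule ccontr)
  have gen: False if "u < v" "a \<le> u" "v \<le> b" "h u = 0" "h v = 0" for u v
  proof -
    have "\<exists>z. u < z \<and> z < v \<and> h' z = 0"
    proof (rule rolle_real)
      show "u < v" "h u = h v" using that by auto
      fix w assume "u \<le> w" "w \<le> v"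
      then show "(h has_real_derivative h' w) (at w)" using d[of w] that by linarith
    qed
    then obtain z where "u < z" "z < v" "h' z = 0" by blast
    then show False using nz[of z] that by linarith
  qed
  assume "x \<noteq> y"
  then consider "x < y" | "y < x" by linarith
  then show False
  proof cases
    case 1 then show False using gen[of x y] xy by blast
  next
    case 2 then show False using gen[of y x] xy by blast
  qed
qed

lemma card_le2_of_no3:
  fixes S :: "real set"
  assumes "\<And>x y z. x \<in> S \<Longrightarrow> y \<in> S \<Longrightarrow> z \<in> S \<Longrightarrow> x < y \<Longrightarrow> y < z \<Longrightarrow> False"
  shows "card S \<le> 2"
proof (rule ccontr)
  assume "\<not> card S \<le> 2"
  then have c: "3 \<le> card S" by simp
  then have fin: "finite S" using card.infinite by fastforce
  have ne: "S \<noteq> {}" using c by auto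
  define x where "x = Min S"
  have xS: "x \<in> S" using fin ne x_def Min_in by blast
  define S1 where "S1 = S - {x}"
  have c1: "2 \<le> card S1" using c xS fin unfolding S1_def by (simp add: card_Diff_singleton)
  have f1: "finite S1" using fin S1_def by simp
  have ne1: "S1 \<noteq> {}" using c1 by auto
  define y where "y = Min S1"
  have yS: "y \<in> S1" using f1 ne1 y_def Min_in by blast
  define S2 where "S2 = S1 - {y}"
  have c2: "1 \<le> card S2" using c1 yS f1 unfolding S2_def by (simp add: card_Diff_singleton)
  have f2: "finite S2" using f1 S2_def by simp
  have ne2: "S2 \<noteq> {}" using c2 by auto
  define z where "z = Min S2"
  have zS: "z \<in> S2" using f2 ne2 z_def Min_in by blast
  have "x \<le> y" using yS fin unfolding x_def S1_def by auto
  moreover have "x \<noteq> y" using yS unfolding S1_def by auto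
  moreover have "y \<le> z" using zS f1 unfolding y_def S2_def by auto
  moreover have "y \<noteq> z" using zS unfolding S2_def by auto
  ultimately show False using assms[of x y z] xS yS zS unfolding S1_def S2_def by auto
qed

lemma atmost2:
  fixes h :: "real \<Rightarrow> real"
  assumes "\<And>x. a \<le> x \<Longrightarrow> x \<le> b \<Longrightarrow> (h has_real_derivative h' x) (at x)"
    and "\<And>x. a \<le> x \<Longrightarrow> x \<le> b \<Longrightarrow> (h' has_real_derivative h'' x) (at x)"
    and "\<And>x. a \<le> x \<Longrightarrow> x \<le> b \<Longrightarrow> h'' x \<noteq> 0"
  shows "card {x. a \<le> x \<and> x \<le> b \<and> h x = 0} \<le> 2"
proof (rule card_le2_of_no3)
  fix x y z assume xyz: "x \<in> {x. a \<le> x \<and> x \<le> b \<and> h x = 0}" "y \<in> {x. a \<le> x \<and> x \<le> b \<and> h x = 0}"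
    "z \<in> {x. a \<le> x \<and> x \<le> b \<and> h x = 0}" "x < y" "y < z"
  have ex: "\<exists>w. p < w \<and> w < q \<and> h' w = 0" if "p < q" "a \<le> p" "q \<le> b" "h p = 0" "h q = 0" for p q
  proof (rule rolle_real)
    show "p < q" "h p = h q" using that by auto
    fix w assume "p \<le> w" "w \<le> q"
    then show "(h has_real_derivative h' w) (at w)" using assms(1)[of w] that by linarith
  qed
  obtain u where u: "x < u" "u < y" "h' u = 0" using ex[of x y] xyz by auto
  obtain v where v: "y < v" "v < z" "h' v = 0" using ex[of y z] xyz by auto
  have "u = v"
  proof (rule atmost1[of a b h' h''])
    show "\<And>w. a \<le> w \<Longrightarrow> w \<le> b \<Longrightarrow> (h' has_real_derivative h'' w) (at w)" by (rule assms(2))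
    show "\<And>w. a \<le> w \<Longrightarrow> w \<le> b \<Longrightarrow> h'' w \<noteq> 0" by (rule assms(3))
    show "a \<le> u" "u \<le> b" "a \<le> v" "v \<le> b" "h' u = 0" "h' v = 0" using xyz u v by auto
  qed
  then show False using u v by simp
qed

lemma abs_sin_shift: "\<bar>sin (x + real k * pi)\<bar> = \<bar>sin x\<bar>"
  by (simp add: sin_add abs_mult)

lemma abs_cos_shift: "\<bar>cos (x + real k * pi)\<bar> = \<bar>cos x\<bar>"
  by (simp add: cos_add abs_mult)

lemma sin_lower:
  assumes "0 < c" "c < pi/2" "c \<le> u" "u \<le> pi - c"
  shows "sin c \<le> sin u"
proof (cases "u \<le> pi/2")
  case True then show ?thesis using assms by (intro sin_monotone_2pi_le) auto
next
  case False
  have "sin c \<le> sin (pi - u)" using assms False by (intro sin_monotone_2pi_le) auto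
  then show ?thesis by simp
qed

lemma cos_lower:
  assumes "c < pi/2" "\<bar>u\<bar> \<le> c"
  shows "cos c \<le> cos u"
proof -
  have "cos c \<le> cos \<bar>u\<bar>" using assms by (intro cos_monotone_0_pi_le) auto
  then show ?thesis by (cases "0 \<le> u") auto
qed

lemma sin_bound9: "\<bar>sin (t::real) + 3 * sin (3*t) + 5 * sin (5*t)\<bar> \<le> 9"
proof -
  have "\<bar>sin t\<bar> \<le> 1" "\<bar>sin (3*t)\<bar> \<le> 1" "\<bar>sin (5*t)\<bar> \<le> 1" by auto
  then show ?thesis by linarith
qed

lemma cos_bound35: "\<bar>cos (t::real) + 9 * cos (3*t) + 25 * cos (5*t)\<bar> \<le> 35"
proof -
  have "\<bar>cos t\<bar> \<le> 1" "\<bar>cos (3*t)\<bar> \<le> 1" "\<bar>cos (5*t)\<bar> \<le> 1" by auto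
  then show ?thesis by linarith
qed

lemma g1f_nz:
  assumes "0 < c" "c < pi/2" "9 < real n * sin c"
    and "real k * pi + c \<le> real n * t" "real n * t \<le> (real k + 1) * pi - c"
  shows "g1f n t \<noteq> 0"
proof -
  define u where "u = real n * t - real k * pi"
  have "sin c \<le> sin u" using assms unfolding u_def by (intro sin_lower) (auto simp: algebra_simps)
  moreover have "real n * t = u + real k * pi" unfolding u_def by simp
  ultimately have "sin c \<le> \<bar>sin (real n * t)\<bar>" using abs_sin_shift[of u k] by auto
  then have "real n * sin c \<le> real n * \<bar>sin (real n * t)\<bar>" by (simp add: mult_left_mono)
  then have "9 < \<bar>real n * sin (real n * t)\<bar>" using assms(3) by (simp add: abs_mult)
  moreover have "g1f n t = -(real n * sin (real n * t)) - (sin t + 3 * sin (3*t) + 5 * sin (5*t))"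
    unfolding g1f_def by simp
  ultimately show ?thesis using sin_bound9[of t] by (smt (verit))
qed

lemma cos_near_node:
  assumes "c < pi/2" "\<bar>real n * t - real k * pi\<bar> \<le> c"
  shows "cos c \<le> \<bar>cos (real n * t)\<bar>"
proof -
  define u where "u = real n * t - real k * pi"
  have "cos c \<le> cos u" using assms unfolding u_def by (intro cos_lower) auto
  moreover have "real n * t = u + real k * pi" unfolding u_def by simp
  ultimately show ?thesis using abs_cos_shift[of u k] by auto
qed

lemma g2f_nz:
  assumes "c < pi/2" "35 < (real n)^2 * cos c" "\<bar>real n * t - real k * pi\<bar> \<le> c"
  shows "g2f n t \<noteq> 0"
proof -
  have "cos c \<le> \<bar>cos (real n * t)\<bar>" by (rule cos_near_node[OF assms(1,3)])
  then have "(real n)^2 * cos c \<le> (real n)^2 * \<bar>cos (real n * t)\<bar>" by (simp add: mult_left_mono)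
  then have "35 < \<bar>(real n * real n) * cos (real n * t)\<bar>" using assms(2) by (simp add: abs_mult power2_eq_square)
  moreover have "g2f n t = -(real n * real n * cos (real n * t)) - (cos t + 9 * cos (3*t) + 25 * cos (5*t))"
    unfolding g2f_def by simp
  ultimately show ?thesis using cos_bound35[of t] by (smt (verit))
qed



definition GG :: "real \<Rightarrow> real" where "GG t = cos t + cos (3*t) + cos (5*t)"

lemma gf_GG: "gf n t = cos (real n * t) + GG t"
  unfolding gf_def GG_def by simp

lemma GG_ff: "GG t = ff (cos t)"
proof -
  have c3: "cos (3*t) = 4 * cos t ^ 3 - 3 * cos t" by (rule cos_treble_cos)
  have cc: "(cos t)^2 = 1 - (sin t)^2" by (simp add: cos_squared_eq)
  have e1: "sin (2*t) = 2 * sin t * cos t" by (rule sin_double)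
  have e2: "cos (2*t) = 1 - 2*(sin t)^2" by (simp add: cos_double cos_squared_eq)
  have s3: "sin (3*t) = sin t * (3 - 4 * (sin t)^2)"
  proof -
    have "sin (3*t) = sin (2*t + t)" by simp
    also have "\<dots> = sin (2*t) * cos t + cos (2*t) * sin t" by (rule sin_add)
    also have "\<dots> = sin t * (3 - 4 * (sin t)^2)"
      unfolding e1 e2 using cc by algebra
    finally show ?thesis .
  qed
  have c5: "cos (5*t) = cos (3*t) * cos (2*t) - sin (3*t) * sin (2*t)"
    using cos_add[of "3*t" "2*t"] by simp
  have "cos (5*t) = 16 * cos t ^ 5 - 20 * cos t ^ 3 + 5 * cos t"
    unfolding c5 c3 s3 e1 e2 using cc by algebra
  then show ?thesis unfolding GG_def ff_def c3 by simp
qed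

lemma trig_region:
  assumes "0 \<le> t" "t < 2*pi" "0 \<le> s" "s \<le> pi/2"
  shows "\<bar>cos t\<bar> \<le> cos s \<longleftrightarrow> (s \<le> t \<and> t \<le> pi - s) \<or> (pi + s \<le> t \<and> t \<le> 2*pi - s)"
proof -
  have key: "\<bar>cos u\<bar> \<le> cos s \<longleftrightarrow> s \<le> u \<and> u \<le> pi - s" if "0 \<le> u" "u \<le> pi" for u
  proof -
    have "cos u \<le> cos s \<longleftrightarrow> s \<le> u" using that assms by (intro cos_mono_le_eq) auto
    moreover have "cos (pi - s) \<le> cos u \<longleftrightarrow> u \<le> pi - s" using that assms by (intro cos_mono_le_eq) auto
    moreover have "cos (pi - s) = - cos s" by simp
    ultimately show ?thesis by (auto simp: abs_le_iff)
  qed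
  show ?thesis
  proof (cases "t \<le> pi")
    case True
    then show ?thesis using key[of t] assms by auto
  next
    case False
    have "cos t = cos (2*pi - t)" by (simp add: cos_diff)
    then show ?thesis using key[of "2*pi - t"] assms False by auto
  qed
qed

context betaloc
begin

definition "a = arccos \<beta>"

lemma a_pos: "0 < a" and a_lt: "a < pi/2" and cos_a: "cos a = \<beta>"
proof -
  show "0 < a" unfolding a_def using arccos_lt_bounded[of \<beta>] b0 b1 by auto
  show "a < pi/2" unfolding a_def using arccos_less_arccos[of 0 \<beta>] b0 b1 by auto
  show "cos a = \<beta>" unfolding a_def using b0 b1 by auto
qed

lemma good_region:
  assumes "0 \<le> t" "t < 2*pi" "\<bar>GG t\<bar> \<le> 1"
  shows "(a \<le> t \<and> t \<le> pi - a) \<or> (pi + a \<le> t \<and> t \<le> 2*pi - a)"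
proof -
  have "\<bar>cos t\<bar> \<le> \<beta>" using ff_shape2[of "cos t"] assms(3) unfolding GG_ff by auto
  then show ?thesis using trig_region[OF assms(1,2), of a] a_pos a_lt cos_a by auto
qed

lemma strict_bound:
  assumes "0 < d" "a + d \<le> pi/2"
  obtains \<eta> where "0 < \<eta>" "\<eta> \<le> 1/4"
    "\<And>t. \<bar>cos t\<bar> \<le> cos (a + d) \<Longrightarrow> \<bar>GG t\<bar> \<le> 1 - 2*\<eta>"
proof -
  define b where "b = cos (a + d)"
  have "cos (a + d) < cos a" using assms a_pos a_lt by (intro cos_monotone_0_pi) auto
  then have bb: "b < \<beta>" unfolding b_def cos_a .
  have b0': "0 \<le> b" unfolding b_def using assms a_pos by (intro cos_ge_zero) auto
  have "continuous_on {-b..b} (\<lambda>x. \<bar>ff x\<bar>)" unfolding ff_def by (intro continuous_intros)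
  then obtain x0 where x0: "x0 \<in> {-b..b}" "\<And>y. y \<in> {-b..b} \<Longrightarrow> \<bar>ff y\<bar> \<le> \<bar>ff x0\<bar>"
    using continuous_attains_sup[of "{-b..b}" "\<lambda>x. \<bar>ff x\<bar>"] b0' by auto
  define m where "m = \<bar>ff x0\<bar>"
  have "m < 1" unfolding m_def using ff_shape1[of x0] x0(1) bb by auto
  define \<eta> where "\<eta> = (1 - m) / 4"
  have "0 \<le> m" unfolding m_def by simp
  show ?thesis
  proof (rule that)
    show "0 < \<eta>" "\<eta> \<le> 1/4" unfolding \<eta>_def using \<open>m < 1\<close> \<open>0 \<le> m\<close> by auto
    fix t assume "\<bar>cos t\<bar> \<le> cos (a + d)"
    then have "cos t \<in> {-b..b}" unfolding b_def by auto
    then have "\<bar>GG t\<bar> \<le> m" unfolding GG_ff m_def using x0(2) by auto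
    then show "\<bar>GG t\<bar> \<le> 1 - 2*\<eta>" unfolding \<eta>_def using \<open>m < 1\<close> by (simp add: field_simps)
  qed
qed

end


lemma card_nat_upper:
  "real (card {k::nat. A \<le> real k \<and> real k \<le> B}) \<le> max 0 (B - A + 1)"
proof -
  have sub: "{k::nat. A \<le> real k \<and> real k \<le> B} \<subseteq> nat ` {\<lceil>A\<rceil>..\<lfloor>B\<rfloor>}"
  proof
    fix k assume "k \<in> {k::nat. A \<le> real k \<and> real k \<le> B}"
    then have "int k \<in> {\<lceil>A\<rceil>..\<lfloor>B\<rfloor>}" by (simp add: ceiling_le_iff le_floor_iff)
    then show "k \<in> nat ` {\<lceil>A\<rceil>..\<lfloor>B\<rfloor>}" by (metis image_eqI nat_int)
  qed
  have "card {k::nat. A \<le> real k \<and> real k \<le> B} \<le> card (nat ` {\<lceil>A\<rceil>..\<lfloor>B\<rfloor>})"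
    by (rule card_mono[OF _ sub]) simp
  also have "\<dots> \<le> card {\<lceil>A\<rceil>..\<lfloor>B\<rfloor>}" by (rule card_image_le) simp
  also have "\<dots> = nat (\<lfloor>B\<rfloor> - \<lceil>A\<rceil> + 1)" by simp
  finally have "real (card {k::nat. A \<le> real k \<and> real k \<le> B}) \<le> real (nat (\<lfloor>B\<rfloor> - \<lceil>A\<rceil> + 1))"
    by linarith
  also have "\<dots> \<le> max 0 (B - A + 1)"
  proof (cases "\<lfloor>B\<rfloor> - \<lceil>A\<rceil> + 1 \<ge> 0")
    case True
    then have "real (nat (\<lfloor>B\<rfloor> - \<lceil>A\<rceil> + 1)) = real_of_int (\<lfloor>B\<rfloor> - \<lceil>A\<rceil> + 1)" by simp
    moreover have "real_of_int \<lfloor>B\<rfloor> \<le> B" "A \<le> real_of_int \<lceil>A\<rceil>" by auto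
    ultimately have "real (nat (\<lfloor>B\<rfloor> - \<lceil>A\<rceil> + 1)) \<le> B - A + 1" by linarith
    then show ?thesis by (simp add: le_max_iff_disj)
  next
    case False then show ?thesis by simp
  qed
  finally show ?thesis .
qed

lemma card_nat_lower:
  assumes "0 \<le> A"
  shows "B - A - 1 \<le> real (card {k::nat. A \<le> real k \<and> real k \<le> B})"
proof -
  have sub: "nat ` {\<lceil>A\<rceil>..\<lfloor>B\<rfloor>} \<subseteq> {k::nat. A \<le> real k \<and> real k \<le> B}"
  proof
    fix k assume "k \<in> nat ` {\<lceil>A\<rceil>..\<lfloor>B\<rfloor>}"
    then obtain i where i: "i \<in> {\<lceil>A\<rceil>..\<lfloor>B\<rfloor>}" "k = nat i" by auto
    have "0 \<le> \<lceil>A\<rceil>" using assms by simp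
    moreover have "\<lceil>A\<rceil> \<le> i" using i(1) by simp
    ultimately have "0 \<le> i" by linarith
    then have "int k = i" using i by simp
    then show "k \<in> {k::nat. A \<le> real k \<and> real k \<le> B}" using i(1)
      by (simp add: ceiling_le_iff le_floor_iff)
  qed
  have fin: "finite {k::nat. A \<le> real k \<and> real k \<le> B}"
  proof (rule finite_subset)
    show "{k::nat. A \<le> real k \<and> real k \<le> B} \<subseteq> {..nat \<lceil>B\<rceil>}"
    proof
      fix k assume "k \<in> {k::nat. A \<le> real k \<and> real k \<le> B}"
      then have "real k \<le> B" by simp
      then have "int k \<le> \<lceil>B\<rceil>" by (metis ceiling_le_iff le_of_int_ceiling of_int_of_nat_eq order_trans ceiling_mono ceiling_of_nat)
      then show "k \<in> {..nat \<lceil>B\<rceil>}" by simp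
    qed
  qed simp
  have c0: "0 \<le> \<lceil>A\<rceil>" using assms by simp
  have inj: "inj_on nat {\<lceil>A\<rceil>..\<lfloor>B\<rfloor>}"
  proof (rule inj_onI)
    fix x y assume xy: "x \<in> {\<lceil>A\<rceil>..\<lfloor>B\<rfloor>}" "y \<in> {\<lceil>A\<rceil>..\<lfloor>B\<rfloor>}" "nat x = nat y"
    have "\<lceil>A\<rceil> \<le> x" "\<lceil>A\<rceil> \<le> y" using xy by auto
    then have "0 \<le> x" "0 \<le> y" using c0 by linarith+
    then show "x = y" using xy(3) by simp
  qed
  have "card (nat ` {\<lceil>A\<rceil>..\<lfloor>B\<rfloor>}) \<le> card {k::nat. A \<le> real k \<and> real k \<le> B}"
    by (rule card_mono[OF fin sub])
  moreover have "card (nat ` {\<lceil>A\<rceil>..\<lfloor>B\<rfloor>}) = nat (\<lfloor>B\<rfloor> - \<lceil>A\<rceil> + 1)"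
    using card_image[OF inj] by simp
  moreover have "B - A - 1 \<le> real (nat (\<lfloor>B\<rfloor> - \<lceil>A\<rceil> + 1))"
  proof -
    have "B - 1 < real_of_int \<lfloor>B\<rfloor>" "real_of_int \<lceil>A\<rceil> < A + 1" by linarith+
    then show ?thesis by linarith
  qed
  ultimately show ?thesis by linarith
qed

lemma cis_inj: "inj_on cis {t. 0 \<le> t \<and> t < 2*pi}"
proof (rule inj_onI)
  fix x y assume x: "x \<in> {t. 0 \<le> t \<and> t < 2*pi}" and y: "y \<in> {t. 0 \<le> t \<and> t < 2*pi}" and e: "cis x = cis y"
  have "cis (x - y) = 1" using e cis_divide[of x y] by (simp add: cis_neq_zero)
  then have "cos (x - y) = 1" by (metis cis.sel(1) one_complex.sel(1))
  then obtain m :: int where m: "x - y = real_of_int m * 2 * pi" unfolding cos_one_2pi_int by blast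
  have "\<bar>real_of_int m * 2 * pi\<bar> < 2 * pi" using x y m by auto
  then have "\<bar>real_of_int m\<bar> < 1" by (simp add: abs_mult)
  then have "m = 0" by linarith
  then show "x = y" using m by simp
qed

lemma circle_repr: assumes "cmod z = 1" shows "\<exists>t. 0 \<le> t \<and> t < 2*pi \<and> z = cis t"
proof -
  have z0: "z \<noteq> 0" using assms by auto
  have zc: "z = cis (Arg z)" using cis_Arg[OF z0] assms by (simp add: sgn_div_norm)
  have b: "- pi < Arg z" "Arg z \<le> pi" using Arg_bounded[of z] by auto
  show ?thesis
  proof (cases "0 \<le> Arg z")
    case True then show ?thesis using zc b by (intro exI[of _ "Arg z"]) auto
  next
    case False
    have "cis (Arg z + 2*pi) = cis (Arg z)" by (simp add: cis_mult[symmetric])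
    then show ?thesis using zc b False by (intro exI[of _ "Arg z + 2*pi"]) auto
  qed
qed

definition Th :: "nat \<Rightarrow> real set" where "Th n = {t. 0 \<le> t \<and> t < 2*pi \<and> gf n t = 0}"

lemma Z_image: assumes "5 \<le> n"
  shows "{z. poly (P2n n) z = 0 \<and> cmod z = 1} = cis ` Th n"
proof
  show "{z. poly (P2n n) z = 0 \<and> cmod z = 1} \<subseteq> cis ` Th n"
  proof
    fix z assume "z \<in> {z. poly (P2n n) z = 0 \<and> cmod z = 1}"
    then have z: "poly (P2n n) z = 0" "cmod z = 1" by auto
    obtain t where t: "0 \<le> t" "t < 2*pi" "z = cis t" using circle_repr[OF z(2)] by blast
    have "gf n t = 0" using zero_iff[OF assms, of t] z t by simp
    then show "z \<in> cis ` Th n" using t unfolding Th_def by auto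
  qed
  show "cis ` Th n \<subseteq> {z. poly (P2n n) z = 0 \<and> cmod z = 1}"
    using zero_iff[OF assms] unfolding Th_def by auto
qed

lemma Th_sub: "Th n \<subseteq> {t. 0 \<le> t \<and> t < 2*pi}" unfolding Th_def by auto

lemma Th_finite: assumes "5 < n" shows "finite (Th n)"
proof -
  have "finite {z. poly (P2n n) z = 0}" by (rule poly_roots_finite) (rule P2n_nz[OF assms])
  moreover have "cis ` Th n \<subseteq> {z. poly (P2n n) z = 0}" using Z_image[of n] assms by auto
  ultimately have "finite (cis ` Th n)" by (rule finite_subset[rotated])
  then show ?thesis using finite_imageD inj_on_subset[OF cis_inj Th_sub] by blast
qed

lemma U_eq: assumes "5 \<le> n"
  shows "(\<Sum>z\<in>{z. poly (P2n n) z = 0 \<and> cmod z = 1}. order z (P2n n)) = (\<Sum>t\<in>Th n. order (cis t) (P2n n))"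
  unfolding Z_image[OF assms] using sum.reindex[OF inj_on_subset[OF cis_inj Th_sub[of n]]] by simp

lemma total_count:
  assumes "5 < n"
  shows "inner_zeros (P2n n) + outer_zeros (P2n n) + (\<Sum>t\<in>Th n. order (cis t) (P2n n)) = 2*n"
proof -
  define p where "p = P2n n"
  have p0: "p \<noteq> 0" unfolding p_def by (rule P2n_nz[OF assms])
  have fin: "finite {z. poly p z = 0}" by (rule poly_roots_finite[OF p0])
  have "(\<Sum>z\<in>{z. poly p z = 0}. order z p) = size (proots p)"
    using p0 by (simp add: size_multiset_overloaded_eq)
  also have "\<dots> = 2*n" unfolding p_def size_proots_complex using P2n_degree assms by simp
  finally have tot: "(\<Sum>z\<in>{z. poly p z = 0}. order z p) = 2*n" .
  define A where "A = {z. poly p z = 0 \<and> cmod z < 1}"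
  define B where "B = {z. poly p z = 0 \<and> cmod z > 1}"
  define C where "C = {z. poly p z = 0 \<and> cmod z = 1}"
  have e: "{z. poly p z = 0} = (A \<union> B) \<union> C" unfolding A_def B_def C_def by auto
  have fA: "finite A" "finite B" "finite C" using fin unfolding A_def B_def C_def by (auto intro: finite_subset)
  have s1: "(\<Sum>z\<in>(A \<union> B) \<union> C. order z p) = (\<Sum>z\<in>A \<union> B. order z p) + (\<Sum>z\<in>C. order z p)"
    by (rule sum.union_disjoint) (use fA in \<open>auto simp: A_def B_def C_def\<close>)
  have s2: "(\<Sum>z\<in>A \<union> B. order z p) = (\<Sum>z\<in>A. order z p) + (\<Sum>z\<in>B. order z p)"
    by (rule sum.union_disjoint) (use fA in \<open>auto simp: A_def B_def\<close>)
  have "(\<Sum>z\<in>{z. poly p z = 0}. order z p) = (\<Sum>z\<in>A. order z p) + (\<Sum>z\<in>B. order z p) + (\<Sum>z\<in>C. order z p)"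
    unfolding e s1 s2 ..
  moreover have "(\<Sum>z\<in>C. order z p) = (\<Sum>t\<in>Th n. order (cis t) (P2n n))"
    unfolding C_def p_def using U_eq assms by simp
  ultimately show ?thesis using tot unfolding inner_zeros_def outer_zeros_def A_def B_def p_def by simp
qed



lemma ivt_sign:
  fixes h :: "real \<Rightarrow> real"
  assumes "continuous_on {x..y} h" "x \<le> y" "h x * h y < 0"
  shows "\<exists>t. x < t \<and> t < y \<and> h t = 0"
proof (cases "h x < 0")
  case True
  then have "0 < h y" using assms(3) by (simp add: mult_less_0_iff)
  then obtain t where t: "x \<le> t" "t \<le> y" "h t = 0" using IVT'[of h x 0 y] True assms by auto
  then have "t \<noteq> x" "t \<noteq> y" using True \<open>0 < h y\<close> by auto
  then show ?thesis using t by (intro exI[of _ t]) auto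
next
  case False
  then have hx: "0 < h x" "h y < 0" using assms(3) by (auto simp: mult_less_0_iff)
  then obtain t where t: "x \<le> t" "t \<le> y" "h t = 0" using IVT2'[of h y 0 x] assms by auto
  then have "t \<noteq> x" "t \<noteq> y" using hx by auto
  then show ?thesis using t by (intro exI[of _ t]) auto
qed

lemma cont_gf: "continuous_on S (gf n)"
  unfolding gf_def by (intro continuous_intros)

lemma node_val: assumes "0 < n" shows "gf n (real k * pi / real n) = (-1)^k + GG (real k * pi / real n)"
  using assms unfolding gf_GG by simp

lemma no3_zeros:
  fixes h :: "real \<Rightarrow> real"
  assumes "\<And>x. lo \<le> x \<Longrightarrow> x \<le> hi \<Longrightarrow> (h has_real_derivative h' x) (at x)"
    and "\<And>x. lo \<le> x \<Longrightarrow> x \<le> hi \<Longrightarrow> (h' has_real_derivative h'' x) (at x)"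
    and "\<And>x. lo \<le> x \<Longrightarrow> x \<le> hi \<Longrightarrow> h'' x \<noteq> 0"
    and "lo \<le> x" "x < y" "y < z" "z \<le> hi" "h x = 0" "h y = 0" "h z = 0"
  shows False
proof -
  have "card {x. lo \<le> x \<and> x \<le> hi \<and> h x = 0} \<le> 2" by (rule atmost2[OF assms(1-3)])
  have ex: "\<exists>w. p < w \<and> w < q \<and> h' w = 0" if "p < q" "lo \<le> p" "q \<le> hi" "h p = 0" "h q = 0" for p q
  proof (rule rolle_real)
    show "p < q" "h p = h q" using that by auto
    fix w assume "p \<le> w" "w \<le> q"
    then show "(h has_real_derivative h' w) (at w)" using assms(1)[of w] that by linarith
  qed
  obtain u where u: "x < u" "u < y" "h' u = 0" using ex[of x y] assms by auto
  obtain v where v: "y < v" "v < z" "h' v = 0" using ex[of y z] assms by auto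
  have "u = v"
  proof (rule atmost1[of lo hi h' h''])
    show "\<And>w. lo \<le> w \<Longrightarrow> w \<le> hi \<Longrightarrow> (h' has_real_derivative h'' w) (at w)" by (rule assms(2))
    show "\<And>w. lo \<le> w \<Longrightarrow> w \<le> hi \<Longrightarrow> h'' w \<noteq> 0" by (rule assms(3))
    show "lo \<le> u" "u \<le> hi" "lo \<le> v" "v \<le> hi" "h' u = 0" "h' v = 0" using assms u v by auto
  qed
  then show False using u v by simp
qed

lemma div_le_iff_n: "0 < (n::real) \<Longrightarrow> (A / n \<le> x) = (A \<le> n * x)"
  by (simp add: pos_divide_le_eq mult.commute)
lemma le_div_iff_n: "0 < (n::real) \<Longrightarrow> (x \<le> A / n) = (n * x \<le> A)"
  by (simp add: pos_le_divide_eq mult.commute)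

definition Wset :: "nat \<Rightarrow> real \<Rightarrow> real \<Rightarrow> nat set" where
  "Wset n l u = {k::nat. real n * l / pi - 1 \<le> real k \<and> real k \<le> real n * u / pi + 1}"

lemma Wset_card: assumes "l \<le> u" shows "real (card (Wset n l u)) \<le> real n * (u - l) / pi + 3"
proof -
  have "real (card (Wset n l u)) \<le> max 0 ((real n * u / pi + 1) - (real n * l / pi - 1) + 1)"
    unfolding Wset_def by (rule card_nat_upper)
  moreover have "0 \<le> real n * (u - l) / pi" using assms by simp
  moreover have "(real n * u / pi + 1) - (real n * l / pi - 1) + 1 = real n * (u - l) / pi + 3"
    by (simp add: field_simps)
  ultimately show ?thesis by simp
qed

lemma Wset_finite: "finite (Wset n l u)"
proof (rule finite_subset)
  show "Wset n l u \<subseteq> {..nat \<lceil>real n * u / pi + 1\<rceil>}"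
  proof
    fix k assume "k \<in> Wset n l u"
    then have "real k \<le> real n * u / pi + 1" unfolding Wset_def by simp
    then have "real k \<le> real (nat \<lceil>real n * u / pi + 1\<rceil>)" by linarith
    then show "k \<in> {..nat \<lceil>real n * u / pi + 1\<rceil>}" by simp
  qed
qed simp

lemma W_mem:
  assumes "l \<le> t" "t \<le> u" "real n * t / pi - 1 \<le> real k" "real k \<le> real n * t / pi + 1"
  shows "k \<in> Wset n l u"
proof -
  have "real n * l / pi \<le> real n * t / pi" using assms by (intro divide_right_mono mult_left_mono) auto
  moreover have "real n * t / pi \<le> real n * u / pi" using assms by (intro divide_right_mono mult_left_mono) auto
  ultimately show ?thesis using assms unfolding Wset_def by auto
qed

lemma kappa_bounds:
  fixes n :: nat and t c :: real
  assumes "0 \<le> t" "0 \<le> c"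
  defines "k \<equiv> nat \<lfloor>(real n * t + c) / pi\<rfloor>"
  shows "real k * pi \<le> real n * t + c" "real n * t + c < (real k + 1) * pi"
proof -
  define r where "r = (real n * t + c) / pi"
  have r0: "0 \<le> r" unfolding r_def using assms by simp
  have kr: "real k = real_of_int \<lfloor>r\<rfloor>" unfolding k_def r_def[symmetric] using r0 by simp
  have "real_of_int \<lfloor>r\<rfloor> \<le> r" "r < real_of_int \<lfloor>r\<rfloor> + 1" by linarith+
  then have "real k \<le> r" "r < real k + 1" using kr by auto
  then show "real k * pi \<le> real n * t + c" "real n * t + c < (real k + 1) * pi"
    unfolding r_def by (simp_all add: field_simps)
qed

lemma order_pos: assumes "5 < n" "t \<in> Th n" shows "1 \<le> order (cis t) (P2n n)"
proof -
  have "poly (P2n n) (cis t) = 0" using zero_iff[of n t] assms unfolding Th_def by auto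
  then have "order (cis t) (P2n n) \<noteq> 0" using P2n_nz[OF assms(1)] by (simp add: order_root)
  then show ?thesis by simp
qed

lemma card_le_U: assumes "5 < n" shows "card (Th n) \<le> (\<Sum>t\<in>Th n. order (cis t) (P2n n))"
proof -
  have "card (Th n) = (\<Sum>t\<in>Th n. 1)" by simp
  also have "\<dots> \<le> (\<Sum>t\<in>Th n. order (cis t) (P2n n))" by (rule sum_mono) (rule order_pos[OF assms])
  finally show ?thesis .
qed



lemma fin_bounded_nat: "finite {k::nat. P k \<and> real k \<le> X}"
proof (rule finite_subset)
  show "{k::nat. P k \<and> real k \<le> X} \<subseteq> {..nat \<lceil>X\<rceil>}"
  proof
    fix k assume "k \<in> {k::nat. P k \<and> real k \<le> X}"
    then have "real k \<le> X" by simp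
    then have "real k \<le> real (nat \<lceil>X\<rceil>)" by linarith
    then show "k \<in> {..nat \<lceil>X\<rceil>}" by simp
  qed
qed simp

lemma hl1: "0 < real n \<Longrightarrow> real n * x / pi \<le> real k \<Longrightarrow> x \<le> real k * pi / real n"
  by (simp add: field_simps)
lemma hl2: "0 < real n \<Longrightarrow> real k \<le> real n * x / pi - 1 \<Longrightarrow> (real k + 1) * pi / real n \<le> x"
  by (simp add: field_simps)

context betaloc
begin

lemma in_strict:
  assumes d: "0 < d" "a + d \<le> pi/2" and eta: "\<And>t. \<bar>cos t\<bar> \<le> cos (a+d) \<Longrightarrow> \<bar>GG t\<bar> \<le> 1 - 2*\<eta>" "0 < \<eta>"
    and r: "(a + d \<le> t \<and> t \<le> pi - a - d) \<or> (pi + a + d \<le> t \<and> t \<le> 2*pi - a - d)"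
  shows "\<bar>GG t\<bar> < 1"
proof -
  have "0 \<le> t" "t < 2*pi" using r d a_pos by auto
  then have "\<bar>cos t\<bar> \<le> cos (a+d)" using trig_region[of t "a+d"] r d a_pos by auto
  then show ?thesis using eta by fastforce
qed

lemma root_between:
  assumes n: "5 < n" and d: "0 < d" "a + d \<le> pi/2"
    and eta: "\<And>t. \<bar>cos t\<bar> \<le> cos (a+d) \<Longrightarrow> \<bar>GG t\<bar> \<le> 1 - 2*\<eta>" "0 < \<eta>"
    and reg: "(a + d \<le> real k * pi / n \<and> (real k + 1) * pi / n \<le> pi - a - d)
           \<or> (pi + a + d \<le> real k * pi / n \<and> (real k + 1) * pi / n \<le> 2*pi - a - d)"
  shows "\<exists>t. real k * pi / n < t \<and> t < (real k + 1) * pi / n \<and> gf n t = 0"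
proof -
  define t1 where "t1 = real k * pi / n"
  define t2 where "t2 = real (Suc k) * pi / n"
  have t2e: "t2 = (real k + 1) * pi / n" unfolding t2_def by simp
  have np: "0 < real n" using n by simp
  have le: "t1 \<le> t2" unfolding t1_def t2_def using np by (intro divide_right_mono mult_right_mono) auto
  have G1: "\<bar>GG t1\<bar> < 1"
    by (rule in_strict[OF d eta]) (use reg le t2e in \<open>auto simp: t1_def\<close>)
  have G2: "\<bar>GG t2\<bar> < 1"
    by (rule in_strict[OF d eta]) (use reg le t2e in \<open>auto simp: t1_def\<close>)
  have v1: "gf n t1 = (-1)^k + GG t1" unfolding t1_def by (rule node_val) (use n in simp)
  have v2: "gf n t2 = (-1)^(Suc k) + GG t2" unfolding t2_def by (rule node_val) (use n in simp)
  have "gf n t1 * gf n t2 < 0"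
  proof (cases "even k")
    case True
    then have "gf n t1 = 1 + GG t1" "gf n t2 = -1 + GG t2" using v1 v2 by auto
    moreover have "0 < 1 + GG t1" "-1 + GG t2 < 0" using G1 G2 by auto
    ultimately show ?thesis by (simp add: mult_pos_neg)
  next
    case False
    then have "gf n t1 = -1 + GG t1" "gf n t2 = 1 + GG t2" using v1 v2 by auto
    moreover have "-1 + GG t1 < 0" "0 < 1 + GG t2" using G1 G2 by auto
    ultimately show ?thesis by (simp add: mult_neg_pos)
  qed
  then obtain t where "t1 < t" "t < t2" "gf n t = 0" using ivt_sign[OF cont_gf le] by blast
  then show ?thesis unfolding t1_def t2e by blast
qed

lemma lower_count:
  assumes n: "5 < n" and d: "0 < d" "a + d \<le> pi/2"
    and eta: "\<And>t. \<bar>cos t\<bar> \<le> cos (a+d) \<Longrightarrow> \<bar>GG t\<bar> \<le> 1 - 2*\<eta>" "0 < \<eta>"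
  shows "2 * (real n * (pi - 2*a - 2*d) / pi) - 4 \<le> real (card (Th n))"
proof -
  have np: "0 < real n" using n by simp
  define K1 where "K1 = {k::nat. real n * (a+d) / pi \<le> real k \<and> real k \<le> real n * (pi-a-d) / pi - 1}"
  define K2 where "K2 = {k::nat. real n * (pi+a+d) / pi \<le> real k \<and> real k \<le> real n * (2*pi-a-d) / pi - 1}"
  define \<zeta> where "\<zeta> k = (SOME t. real k * pi / n < t \<and> t < (real k + 1) * pi / n \<and> gf n t = 0)" for k
  have reg: "(a + d \<le> real k * pi / n \<and> (real k + 1) * pi / n \<le> pi - a - d)
           \<or> (pi + a + d \<le> real k * pi / n \<and> (real k + 1) * pi / n \<le> 2*pi - a - d)" if "k \<in> K1 \<union> K2" for k
  proof -
    from that consider "k \<in> K1" | "k \<in> K2" by blast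
    then show ?thesis
    proof cases
      case 1
      then have "real n * (a+d) / pi \<le> real k" "real k \<le> real n * (pi-a-d) / pi - 1"
        unfolding K1_def mem_Collect_eq by blast+
      then show ?thesis using hl1[OF np, of "a+d" k] hl2[OF np, of k "pi-a-d"] by auto
    next
      case 2
      then have "real n * (pi+a+d) / pi \<le> real k" "real k \<le> real n * (2*pi-a-d) / pi - 1"
        unfolding K2_def mem_Collect_eq by blast+
      then show ?thesis using hl1[OF np, of "pi+a+d" k] hl2[OF np, of k "2*pi-a-d"] by auto
    qed
  qed
  have z: "real k * pi / n < \<zeta> k \<and> \<zeta> k < (real k + 1) * pi / n \<and> gf n (\<zeta> k) = 0" if "k \<in> K1 \<union> K2" for k
    unfolding \<zeta>_def by (rule someI_ex) (rule root_between[OF n d eta reg[OF that]])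
  have inj: "inj_on \<zeta> (K1 \<union> K2)"
  proof (rule inj_onI)
    fix k k' assume k: "k \<in> K1 \<union> K2" and k': "k' \<in> K1 \<union> K2" and e: "\<zeta> k = \<zeta> k'"
    have gen: False if "k1 < k2" "k1 \<in> K1 \<union> K2" "k2 \<in> K1 \<union> K2" "\<zeta> k1 = \<zeta> k2" for k1 k2
    proof -
      have "(real k1 + 1) * pi / n \<le> real k2 * pi / n"
        using that np by (intro divide_right_mono mult_right_mono) auto
      then show False using z[OF that(2)] z[OF that(3)] that(4) by linarith
    qed
    show "k = k'"
    proof (rule ccontr)
      assume "k \<noteq> k'"
      then consider "k < k'" | "k' < k" by linarith
      then show False
      proof cases
        case 1 then show ?thesis using gen[of k k'] k k' e by blast
      next
        case 2 then show ?thesis using gen[of k' k] k k' e by auto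
      qed
    qed
  qed
  have sub: "\<zeta> ` (K1 \<union> K2) \<subseteq> Th n"
  proof
    fix t assume "t \<in> \<zeta> ` (K1 \<union> K2)"
    then obtain k where k: "k \<in> K1 \<union> K2" "t = \<zeta> k" by auto
    have "0 \<le> real k * pi / n" using np by simp
    moreover have "(real k + 1) * pi / n \<le> 2 * pi - a - d" using reg[OF k(1)] a_pos d by auto
    moreover have zk: "real k * pi / n < \<zeta> k" "\<zeta> k < (real k + 1) * pi / n" "gf n (\<zeta> k) = 0"
      using z[OF k(1)] by auto
    ultimately have "0 \<le> \<zeta> k" "\<zeta> k < 2*pi" using a_pos d by linarith+
    then show "t \<in> Th n" using zk k(2) unfolding Th_def by auto
  qed
  have fK: "finite K1" "finite K2" unfolding K1_def K2_def by (rule fin_bounded_nat)+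
  have disj: "K1 \<inter> K2 = {}"
  proof -
    have "real n * (pi-a-d) / pi \<le> real n * (pi+a+d) / pi"
      using np a_pos d by (intro divide_right_mono mult_left_mono) auto
    then show ?thesis unfolding K1_def K2_def by auto
  qed
  have "card (K1 \<union> K2) = card (\<zeta> ` (K1 \<union> K2))" by (rule card_image[OF inj, symmetric])
  also have "\<dots> \<le> card (Th n)" by (rule card_mono[OF Th_finite[OF n] sub])
  finally have c: "card K1 + card K2 \<le> card (Th n)" using card_Un_disjoint[OF fK disj] by simp
  have A0: "0 \<le> real n * (a+d) / pi" "0 \<le> real n * (pi+a+d) / pi" using a_pos d by auto
  have l1: "(real n * (pi-a-d) / pi - 1) - real n * (a+d) / pi - 1 \<le> real (card K1)"
    unfolding K1_def by (rule card_nat_lower[OF A0(1)])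
  have l2: "(real n * (2*pi-a-d) / pi - 1) - real n * (pi+a+d) / pi - 1 \<le> real (card K2)"
    unfolding K2_def by (rule card_nat_lower[OF A0(2)])
  have e1: "(real n * (pi-a-d) / pi - 1) - real n * (a+d) / pi - 1 = real n * (pi - 2*a - 2*d) / pi - 2"
    by (simp add: field_simps)
  have e2: "(real n * (2*pi-a-d) / pi - 1) - real n * (pi+a+d) / pi - 1 = real n * (pi - 2*a - 2*d) / pi - 2"
    by (simp add: field_simps)
  have "real (card K1) + real (card K2) \<le> real (card (Th n))" using c by linarith
  then show ?thesis using l1 l2 e1 e2 by linarith
qed

end


lemma kW_aux:
  assumes "real k * pi \<le> X + c" "X + c < (real k + 1) * pi" "0 \<le> c" "c < pi"
  shows "X / pi - 1 \<le> real k" "real k \<le> X / pi + 1"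
proof -
  have "real k \<le> (X + c) / pi" using assms(1) by (simp add: pos_le_divide_eq)
  moreover have "(X + c) / pi = X / pi + c / pi" by (simp add: add_divide_distrib)
  moreover have "c / pi \<le> 1" using assms by simp
  ultimately show "real k \<le> X / pi + 1" by linarith
  have "(X + c) / pi < real k + 1" using assms(2) by (simp add: pos_divide_less_eq)
  moreover have "0 \<le> c / pi" using assms by simp
  ultimately show "X / pi - 1 \<le> real k" using \<open>(X + c) / pi = X / pi + c / pi\<close> by linarith
qed

context betaloc
begin

lemma upper_count:
  assumes n: "5 < n" and c: "0 < c" "c < pi/2" "cos c = 1 - \<eta>" "9 < real n * sin c" "35 < (real n)^2 * cos c"
    and d: "0 < d" "a + d \<le> pi/2"
    and bnd: "\<And>t. 0 \<le> t \<Longrightarrow> t < 2*pi \<Longrightarrow> \<bar>GG t\<bar> \<le> 1 \<Longrightarrow> 1 - \<eta> \<le> \<bar>GG t\<bar> \<Longrightarrow>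
       (a \<le> t \<and> t \<le> a+d) \<or> (pi-a-d \<le> t \<and> t \<le> pi-a) \<or> (pi+a \<le> t \<and> t \<le> pi+a+d) \<or> (2*pi-a-d \<le> t \<and> t \<le> 2*pi-a)"
  shows "real (\<Sum>t\<in>Th n. order (cis t) (P2n n)) \<le> 2*(real n*(pi - 2*a)/pi + 3) + 4*(4*(real n * d/pi + 3))"
proof -
  have np: "0 < real n" using n by simp
  have n5: "5 \<le> n" using n by simp
  define \<kappa> where "\<kappa> t = nat \<lfloor>(real n * t + c) / pi\<rfloor>" for t
  have kb: "real (\<kappa> t) * pi \<le> real n * t + c" "real n * t + c < (real (\<kappa> t) + 1) * pi" if "0 \<le> t" for t
    using kappa_bounds[OF that, of c n] c unfolding \<kappa>_def by auto
  have kW: "real n * t / pi - 1 \<le> real (\<kappa> t)" "real (\<kappa> t) \<le> real n * t / pi + 1" if "0 \<le> t" for t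
    using kW_aux[OF kb[OF that]] c by auto
  define K1 where "K1 = Wset n a (pi - a) \<union> Wset n (pi + a) (2*pi - a)"
  define K2 where "K2 = Wset n a (a+d) \<union> Wset n (pi-a-d) (pi-a) \<union> Wset n (pi+a) (pi+a+d) \<union> Wset n (2*pi-a-d) (2*pi-a)"
  have fK: "finite K1" "finite K2" unfolding K1_def K2_def by (simp_all add: Wset_finite)
  define TM where "TM = {t\<in>Th n. real (\<kappa> t) * pi + c \<le> real n * t}"
  define TN where "TN = {t\<in>Th n. real n * t < real (\<kappa> t) * pi + c}"
  have fT: "finite TM" "finite TN" using Th_finite[OF n] unfolding TM_def TN_def by auto
  have spl: "Th n = TM \<union> TN" "TM \<inter> TN = {}" unfolding TM_def TN_def by auto
  have thp: "0 \<le> t" "t < 2*pi" "gf n t = 0" if "t \<in> Th n" for t using that unfolding Th_def by auto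
  have GGc: "GG t = - cos (real n * t)" if "t \<in> Th n" for t using thp[OF that] unfolding gf_GG by simp
  have ordM: "order (cis t) (P2n n) = 1" if "t \<in> TM" for t
  proof -
    have t: "t \<in> Th n" "real (\<kappa> t) * pi + c \<le> real n * t" using that unfolding TM_def by auto
    have "real n * t \<le> (real (\<kappa> t) + 1) * pi - c" using kb(2)[OF thp(1)[OF t(1)]] by simp
    then have "g1f n t \<noteq> 0" using g1f_nz[OF c(1,2,4) t(2)] by simp
    then show ?thesis using order_one[OF n5 thp(3)[OF t(1)]] by simp
  qed
  have sumM: "(\<Sum>t\<in>TM. order (cis t) (P2n n)) = card TM"
    using ordM by simp
  have injM: "inj_on \<kappa> TM"
  proof (rule inj_onI)
    fix t t' assume t: "t \<in> TM" and t': "t' \<in> TM" and e: "\<kappa> t = \<kappa> t'"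
    define k where "k = \<kappa> t"
    define lo where "lo = (real k * pi + c) / real n"
    define hi where "hi = ((real k + 1) * pi - c) / real n"
    have mem: "lo \<le> s \<and> s \<le> hi" if "s \<in> TM" "\<kappa> s = k" for s
    proof -
      have s: "s \<in> Th n" "real k * pi + c \<le> real n * s" using that unfolding TM_def by auto
      have "real n * s \<le> (real k + 1) * pi - c" using kb(2)[OF thp(1)[OF s(1)]] that(2) by simp
      then show ?thesis using s np unfolding lo_def hi_def by (simp add: div_le_iff_n le_div_iff_n)
    qed
    show "t = t'"
    proof (rule atmost1[of lo hi "gf n" "g1f n"])
      show "\<And>x. lo \<le> x \<Longrightarrow> x \<le> hi \<Longrightarrow> (gf n has_real_derivative g1f n x) (at x)" by (rule gf_deriv)
      show "g1f n x \<noteq> 0" if "lo \<le> x" "x \<le> hi" for x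
      proof -
        have "real k * pi + c \<le> real n * x" "real n * x \<le> (real k + 1) * pi - c"
          using that np unfolding lo_def hi_def by (simp_all add: div_le_iff_n le_div_iff_n)
        then show ?thesis by (rule g1f_nz[OF c(1,2,4)])
      qed
      show "lo \<le> t" "t \<le> hi" using mem[OF t] k_def by auto
      show "lo \<le> t'" "t' \<le> hi" using mem[OF t'] k_def e by auto
      show "gf n t = 0" "gf n t' = 0" using t t' thp unfolding TM_def by auto
    qed
  qed
  have imM: "\<kappa> ` TM \<subseteq> K1"
  proof
    fix k assume "k \<in> \<kappa> ` TM"
    then obtain t where t: "t \<in> TM" "k = \<kappa> t" by auto
    have tt: "t \<in> Th n" using t unfolding TM_def by auto
    have "\<bar>GG t\<bar> \<le> 1" using GGc[OF tt] by simp
    then have r: "(a \<le> t \<and> t \<le> pi - a) \<or> (pi + a \<le> t \<and> t \<le> 2*pi - a)"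
      using good_region thp[OF tt] by auto
    show "k \<in> K1" using r W_mem[of _ t _ n k] kW[OF thp(1)[OF tt]] t(2) unfolding K1_def by auto
  qed
  have cM: "card TM \<le> card K1"
    using card_inj_on_le[OF injM imM fK(1)] .
  have nearN: "\<bar>real n * t - real (\<kappa> t) * pi\<bar> \<le> c" if "t \<in> TN" for t
  proof -
    have tt: "t \<in> Th n" "real n * t < real (\<kappa> t) * pi + c" using that unfolding TN_def by auto
    show ?thesis using kb(1)[OF thp(1)[OF tt(1)]] tt(2) by linarith
  qed
  have ordN: "order (cis t) (P2n n) \<le> 2" if "t \<in> TN" for t
  proof -
    have tt: "t \<in> Th n" using that unfolding TN_def by auto
    show ?thesis
    proof (cases "g1f n t = 0")
      case True
      have "g2f n t \<noteq> 0" by (rule g2f_nz[OF c(2) c(5) nearN[OF that]])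
      then show ?thesis using order_two[OF n5 thp(3)[OF tt] True] by simp
    next
      case False then show ?thesis using order_one[OF n5 thp(3)[OF tt]] by simp
    qed
  qed
  have sumN: "(\<Sum>t\<in>TN. order (cis t) (P2n n)) \<le> 2 * card TN"
  proof -
    have "(\<Sum>t\<in>TN. order (cis t) (P2n n)) \<le> (\<Sum>t\<in>TN. 2)" by (rule sum_mono) (rule ordN)
    then show ?thesis by simp
  qed
  have imN: "\<kappa> ` TN \<subseteq> K2"
  proof
    fix k assume "k \<in> \<kappa> ` TN"
    then obtain t where t: "t \<in> TN" "k = \<kappa> t" by auto
    have tt: "t \<in> Th n" using t unfolding TN_def by auto
    have "cos c \<le> \<bar>cos (real n * t)\<bar>" by (rule cos_near_node[OF c(2) nearN[OF t(1)]])
    then have "1 - \<eta> \<le> \<bar>GG t\<bar>" "\<bar>GG t\<bar> \<le> 1" using GGc[OF tt] c(3) by auto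
    then have r: "(a \<le> t \<and> t \<le> a+d) \<or> (pi-a-d \<le> t \<and> t \<le> pi-a) \<or> (pi+a \<le> t \<and> t \<le> pi+a+d) \<or> (2*pi-a-d \<le> t \<and> t \<le> 2*pi-a)"
      using bnd thp[OF tt] by auto
    show "k \<in> K2" using r W_mem[of _ t _ n k] kW[OF thp(1)[OF tt]] t(2) unfolding K2_def by auto
  qed
  have fib: "card {t \<in> TN. \<kappa> t = k} \<le> 2" for k
  proof (rule card_le2_of_no3)
    fix x y z assume xyz: "x \<in> {t \<in> TN. \<kappa> t = k}" "y \<in> {t \<in> TN. \<kappa> t = k}" "z \<in> {t \<in> TN. \<kappa> t = k}"
      "x < y" "y < z"
    define lo where "lo = (real k * pi - c) / real n"
    define hi where "hi = (real k * pi + c) / real n"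
    have mem: "lo \<le> s \<and> s \<le> hi" if "s \<in> {t \<in> TN. \<kappa> t = k}" for s
    proof -
      have "\<bar>real n * s - real k * pi\<bar> \<le> c" using nearN[of s] that by auto
      then have "real k * pi - c \<le> real n * s" "real n * s \<le> real k * pi + c" by linarith+
      then show ?thesis using np unfolding lo_def hi_def by (simp add: div_le_iff_n le_div_iff_n)
    qed
    show False
    proof (rule no3_zeros[of lo hi "gf n" "g1f n" "g2f n" x y z])
      show "\<And>x. lo \<le> x \<Longrightarrow> x \<le> hi \<Longrightarrow> (gf n has_real_derivative g1f n x) (at x)" by (rule gf_deriv)
      show "\<And>x. lo \<le> x \<Longrightarrow> x \<le> hi \<Longrightarrow> (g1f n has_real_derivative g2f n x) (at x)" by (rule g1f_deriv)
      show "g2f n w \<noteq> 0" if "lo \<le> w" "w \<le> hi" for w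
      proof -
        have "real k * pi - c \<le> real n * w" "real n * w \<le> real k * pi + c"
          using that np unfolding lo_def hi_def by (simp_all add: div_le_iff_n le_div_iff_n)
        then have "\<bar>real n * w - real k * pi\<bar> \<le> c" by linarith
        then show ?thesis by (rule g2f_nz[OF c(2) c(5)])
      qed
      show "lo \<le> x" "x < y" "y < z" "z \<le> hi" using mem[OF xyz(1)] mem[OF xyz(3)] xyz(4,5) by auto
      show "gf n x = 0" "gf n y = 0" "gf n z = 0" using xyz thp unfolding TN_def by auto
    qed
  qed
  have "card TN = (\<Sum>t\<in>TN. (1::nat))" by simp
  also have "\<dots> = (\<Sum>k\<in>K2. \<Sum>t\<in>{x \<in> TN. \<kappa> x = k}. (1::nat))"
    by (rule sum.group[OF fT(2) fK(2) imN, symmetric])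
  also have "\<dots> = (\<Sum>k\<in>K2. card {x \<in> TN. \<kappa> x = k})" by simp
  also have "\<dots> \<le> (\<Sum>k\<in>K2. 2)" by (rule sum_mono) (rule fib)
  finally have cN: "card TN \<le> 2 * card K2" by simp
  have "(\<Sum>t\<in>Th n. order (cis t) (P2n n)) = (\<Sum>t\<in>TM. order (cis t) (P2n n)) + (\<Sum>t\<in>TN. order (cis t) (P2n n))"
    unfolding spl(1) by (rule sum.union_disjoint[OF fT spl(2)])
  also have "\<dots> \<le> card K1 + 4 * card K2" using sumM sumN cM cN by linarith
  finally have "real (\<Sum>t\<in>Th n. order (cis t) (P2n n)) \<le> real (card K1 + 4 * card K2)"
    by (simp only: of_nat_le_iff)
  then have U: "real (\<Sum>t\<in>Th n. order (cis t) (P2n n)) \<le> real (card K1) + 4 * real (card K2)"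
    by simp
  have a2: "a \<le> pi - a" using a_lt by simp
  have "real (card K1) \<le> real (card (Wset n a (pi - a))) + real (card (Wset n (pi + a) (2*pi - a)))"
    unfolding K1_def using card_Un_le[of "Wset n a (pi - a)" "Wset n (pi + a) (2*pi - a)"] by linarith
  also have "\<dots> \<le> (real n * (pi - a - a) / pi + 3) + (real n * (2*pi - a - (pi + a)) / pi + 3)"
    using Wset_card[OF a2, of n] Wset_card[of "pi+a" "2*pi-a" n] a_lt by (intro add_mono) auto
  also have "\<dots> = 2*(real n*(pi - 2*a)/pi + 3)" by (simp add: field_simps)
  finally have C1: "real (card K1) \<le> 2*(real n*(pi - 2*a)/pi + 3)" .
  have wd: "real (card (Wset n l (l + d))) \<le> real n * d / pi + 3" for l
    using Wset_card[of l "l+d" n] d by simp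
  have wd2: "real (card (Wset n (l - d) l)) \<le> real n * d / pi + 3" for l
    using Wset_card[of "l-d" l n] d by simp
  have "real (card K2) \<le> real (card (Wset n a (a+d))) + real (card (Wset n (pi-a-d) (pi-a)))
      + real (card (Wset n (pi+a) (pi+a+d))) + real (card (Wset n (2*pi-a-d) (2*pi-a)))"
  proof -
    have "card K2 \<le> card (Wset n a (a+d)) + card (Wset n (pi-a-d) (pi-a))
      + card (Wset n (pi+a) (pi+a+d)) + card (Wset n (2*pi-a-d) (2*pi-a))"
    proof -
      let ?W1 = "Wset n a (a+d)" and ?W2 = "Wset n (pi-a-d) (pi-a)" and ?W3 = "Wset n (pi+a) (pi+a+d)"
        and ?W4 = "Wset n (2*pi-a-d) (2*pi-a)"
      have "card K2 \<le> card (?W1 \<union> ?W2 \<union> ?W3) + card ?W4" unfolding K2_def by (rule card_Un_le)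
      moreover have "card (?W1 \<union> ?W2 \<union> ?W3) \<le> card (?W1 \<union> ?W2) + card ?W3" by (rule card_Un_le)
      moreover have "card (?W1 \<union> ?W2) \<le> card ?W1 + card ?W2" by (rule card_Un_le)
      ultimately show ?thesis by linarith
    qed
    then show ?thesis by linarith
  qed
  also have "\<dots> \<le> (real n * d/pi + 3) + (real n * d/pi + 3) + (real n * d/pi + 3) + (real n * d/pi + 3)"
    using wd[of a] wd2[of "pi-a"] wd[of "pi+a"] wd2[of "2*pi-a"] by (intro add_mono)
  also have "\<dots> = 4*(real n * d/pi + 3)" by simp
  finally have C2: "real (card K2) \<le> 4*(real n * d/pi + 3)" .
  show ?thesis using U C1 C2 by linarith
qed

end


lemma abs_help: fixes U Y X :: real
  assumes "U \<le> Y + 16*X + 54" "Y - 4*X - 4 \<le> U" "0 \<le> X"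
  shows "\<bar>Y - U\<bar> \<le> 16*X + 54"
  using assms by linarith

context betaloc
begin

lemma C_formula: assumes "5 < n"
  shows "C_ratio (P2n n) = (2 * real n - real (\<Sum>t\<in>Th n. order (cis t) (P2n n))) / (2 * real n)"
proof -
  have "inner_zeros (P2n n) + outer_zeros (P2n n) = 2*n - (\<Sum>t\<in>Th n. order (cis t) (P2n n))"
    using total_count[OF assms] by linarith
  moreover have "(\<Sum>t\<in>Th n. order (cis t) (P2n n)) \<le> 2*n" using total_count[OF assms] by linarith
  ultimately have "real (inner_zeros (P2n n) + outer_zeros (P2n n)) = 2 * real n - real (\<Sum>t\<in>Th n. order (cis t) (P2n n))"
    by (simp add: of_nat_diff)
  then show ?thesis unfolding C_ratio_def using P2n_degree[OF assms] by simp
qed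

lemma main_limit: "(\<lambda>n. C_ratio (P2n n)) \<longlonglongrightarrow> 2 / pi * a"
proof (rule LIMSEQ_I)
  fix \<epsilon> :: real assume eps: "0 < \<epsilon>"
  define d where "d = min (\<epsilon> * pi / 32) ((pi/2 - a)/2)"
  have d0: "0 < d" unfolding d_def using eps a_lt by auto
  have "d \<le> (pi/2 - a)/2" unfolding d_def by (rule min.cobounded2)
  moreover have "(pi/2 - a)/2 = pi/4 - a/2" by simp
  ultimately have d1: "a + d \<le> pi/2" using a_lt by linarith
  have d2: "d \<le> \<epsilon> * pi / 32" unfolding d_def by auto
  obtain \<eta> where eta: "0 < \<eta>" "\<eta> \<le> 1/4" "\<And>t. \<bar>cos t\<bar> \<le> cos (a + d) \<Longrightarrow> \<bar>GG t\<bar> \<le> 1 - 2*\<eta>"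
    using strict_bound[OF d0 d1] by blast
  define c where "c = arccos (1 - \<eta>)"
  have cc: "cos c = 1 - \<eta>" unfolding c_def using eta by simp
  have c0: "0 < c" "c < pi" unfolding c_def using arccos_lt_bounded[of "1 - \<eta>"] eta by auto
  have c1: "c < pi/2" unfolding c_def using arccos_less_arccos[of 0 "1 - \<eta>"] eta by simp
  have sc: "0 < sin c" using c0 by (simp add: sin_gt_zero)
  have bnd: "(a \<le> t \<and> t \<le> a+d) \<or> (pi-a-d \<le> t \<and> t \<le> pi-a) \<or> (pi+a \<le> t \<and> t \<le> pi+a+d) \<or> (2*pi-a-d \<le> t \<and> t \<le> 2*pi-a)"
    if t: "0 \<le> t" "t < 2*pi" "\<bar>GG t\<bar> \<le> 1" "1 - \<eta> \<le> \<bar>GG t\<bar>" for t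
  proof -
    have g: "(a \<le> t \<and> t \<le> pi - a) \<or> (pi + a \<le> t \<and> t \<le> 2*pi - a)" by (rule good_region[OF t(1-3)])
    have "\<not> \<bar>cos t\<bar> \<le> cos (a + d)" using eta(3)[of t] eta(1) t(4) by force
    then have "\<not> ((a + d \<le> t \<and> t \<le> pi - (a + d)) \<or> (pi + (a + d) \<le> t \<and> t \<le> 2*pi - (a + d)))"
      using trig_region[OF t(1,2), of "a+d"] d0 d1 a_pos by auto
    then show ?thesis using g by auto
  qed
  define N where "N = nat \<lceil>max (max 47 (9 / sin c + 1)) (54 / \<epsilon> + 1)\<rceil>"
  show "\<exists>no. \<forall>n\<ge>no. norm (C_ratio (P2n n) - 2 / pi * a) < \<epsilon>"
  proof (intro exI allI impI)
    fix n assume nN: "N \<le> n"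
    have Nb: "max (max 47 (9 / sin c + 1)) (54 / \<epsilon> + 1) \<le> real n"
      using nN unfolding N_def by linarith
    have n47: "47 \<le> real n" and n9: "9 / sin c < real n" and n54: "54 / \<epsilon> < real n" using Nb by auto
    have n5: "5 < n" using n47 by simp
    have np: "0 < real n" using n47 by simp
    have h9: "9 < real n * sin c" using n9 sc by (simp add: divide_less_eq mult.commute)
    have h35: "35 < (real n)^2 * cos c"
    proof -
      have "47 * 47 * (3/4) \<le> real n * real n * cos c"
        using n47 cc eta(2) by (intro mult_mono) auto
      then show ?thesis by (simp add: power2_eq_square)
    qed
    define U where "U = real (\<Sum>t\<in>Th n. order (cis t) (P2n n))"
    have Uhi: "U \<le> 2*(real n*(pi - 2*a)/pi + 3) + 4*(4*(real n * d/pi + 3))"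
      unfolding U_def by (rule upper_count[OF n5 c0(1) c1 cc h9 h35 d0 d1 bnd])
    have Ulo: "2 * (real n * (pi - 2*a - 2*d) / pi) - 4 \<le> U"
      using lower_count[OF n5 d0 d1 eta(3,1)] card_le_U[OF n5] unfolding U_def by linarith
    define D where "D = 2 * real n * (pi - 2*a) / pi - U"
    have e1: "2 * (real n * (pi - 2*a - 2*d) / pi) = 2 * real n * (pi - 2*a) / pi - 4 * (real n * d / pi)"
      by (simp add: field_simps)
    have e2: "2*(real n*(pi - 2*a)/pi + 3) + 4*(4*(real n * d/pi + 3)) = 2 * real n * (pi - 2*a) / pi + 16 * (real n * d / pi) + 54"
      by (simp add: field_simps)
    have nd0: "0 \<le> real n * d / pi" using d0 by simp
    have Uhi': "U \<le> 2 * real n * (pi - 2*a) / pi + 16 * (real n * d / pi) + 54" using Uhi unfolding e2 .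
    have Ulo': "2 * real n * (pi - 2*a) / pi - 4 * (real n * d / pi) - 4 \<le> U" using Ulo unfolding e1 .
    have Db: "\<bar>D\<bar> \<le> 16 * (real n * d / pi) + 54" unfolding D_def by (rule abs_help[OF Uhi' Ulo' nd0])
    have CD: "C_ratio (P2n n) - 2 / pi * a = D / (2 * real n)"
      unfolding C_formula[OF n5] D_def U_def using np by (simp add: field_simps)
    have "\<bar>D / (2 * real n)\<bar> = \<bar>D\<bar> / (2 * real n)" using np by simp
    also have "\<dots> \<le> (16 * (real n * d / pi) + 54) / (2 * real n)"
      using Db np by (intro divide_right_mono) auto
    also have "\<dots> = 8 * d / pi + 27 / real n" using np by (simp add: field_simps)
    also have "\<dots> < \<epsilon>"
    proof -
      have "8 * d / pi \<le> \<epsilon> / 4" using d2 by (simp add: field_simps)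
      moreover have "27 / real n < \<epsilon> / 2"
      proof -
        have "54 < \<epsilon> * real n" using n54 eps by (simp add: divide_less_eq mult.commute)
        then show ?thesis using np by (simp add: field_simps)
      qed
      ultimately show ?thesis using eps by linarith
    qed
    finally show "norm (C_ratio (P2n n) - 2 / pi * a) < \<epsilon>" unfolding CD by simp
  qed
qed

end

theorem mainTheorem8:
  fixes \<beta> :: real
  assumes "0 < \<beta>" and "\<beta> < 1"
    and "16 * \<beta>^5 - 16 * \<beta>^3 + 3 * \<beta> = 1"
  shows "(\<lambda>n. C_ratio (P2n n)) \<longlonglongrightarrow> 2 / pi * arccos \<beta>"
proof -
  interpret B: betaloc \<beta> using assms unfolding betaloc_def ff_def by auto
  show ?thesis using B.main_limit unfolding B.a_def .
qed


end
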